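(* Let $\mathcal{G}$ be a strongly connected directed graph on $[N]$ containing all self-loops, and let $\epsilon,C_1,C_2>0$. Let $\{M^{(t)}\}_{t\ge0}=\{D^{(t)}A^{(t)}\}_{t\ge0}$ be a sequence in $\mathcal{M}_{\mathcal{G},\epsilon,C_1,C_2}$ and let $P^{(t)}=M^{(t)}M^{(t-1)}\cdots M^{(0)}$. Then the sequence of partial products $\{P^{(t)}\}_{t\ge0}$ is ergodic: there exists a sequence of entrywise positive rank one matrices $\{S^{(t)}\}_{t\ge0}$ such that $\lim_{t\to\infty}P^{(t)}_{ij}/S^{(t)}_{ij}=1$ for all $i,j\in[N]$.
   Context: $\mathcal{A}_{\mathcal{G},\epsilon}$ is the set of $N\times N$ row-stochastic matrices $A$ with $\epsilon\le A_{ij}\le1$ if $(j,i)\in E(\mathcal{G})$ and $A_{ij}=0$ if $(j,i)\notin E(\mathcal{G})$. $\mathcal{D}_{C_1,C_2}$ is the set of diagonal matrices $\mathrm{diag}(\mathbf{d})$ with $C_1\le\mathbf{d}_i\le C_2$ for all $i$. $\mathcal{M}_{\mathcal{G},\epsilon,C_1,C_2}=\{DA: D\in\mathcal{D}_{C_1,C_2},\ A\in\mathcal{A}_{\mathcal{G},\epsilon}\}$. Strongly connected: any two distinct nodes are mutually reachable by directed paths. *)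

theory Defs
  imports "HOL-Analysis.Analysis"
begin

text \<open>Nodes of the graph are the elements of a finite type 'n (playing the role of [N]);
  the directed graph G is given by its edge set E. An edge (j,i) means j -> i.\<close>

definition strongly_connected :: "('n \<times> 'n) set \<Rightarrow> bool" where
  "strongly_connected E \<longleftrightarrow> (\<forall>i j. i \<noteq> j \<longrightarrow> (i, j) \<in> E\<^sup>* \<and> (j, i) \<in> E\<^sup>*)"

definition has_all_self_loops :: "('n \<times> 'n) set \<Rightarrow> bool" where
  "has_all_self_loops E \<longleftrightarrow> (\<forall>i. (i, i) \<in> E)"

definition row_stochastic :: "real^'n^'n \<Rightarrow> bool" where
  "row_stochastic A \<longleftrightarrow> (\<forall>i j. 0 \<le> A $ i $ j) \<and> (\<forall>i. (\<Sum>j\<in>UNIV. A $ i $ j) = 1)"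

definition A_set :: "('n::finite \<times> 'n) set \<Rightarrow> real \<Rightarrow> (real^'n^'n) set" where
  "A_set E \<epsilon> = {A. row_stochastic A \<and>
     (\<forall>i j. ((j, i) \<in> E \<longrightarrow> \<epsilon> \<le> A $ i $ j \<and> A $ i $ j \<le> 1) \<and>
            ((j, i) \<notin> E \<longrightarrow> A $ i $ j = 0))}"

definition D_set :: "real \<Rightarrow> real \<Rightarrow> (real^'n^'n) set" where
  "D_set C1 C2 = {(\<chi> i j. if i = j then d $ i else 0) | d :: real^'n. \<forall>i. C1 \<le> d $ i \<and> d $ i \<le> C2}"

definition M_set :: "('n::finite \<times> 'n) set \<Rightarrow> real \<Rightarrow> real \<Rightarrow> real \<Rightarrow> (real^'n^'n) set" where
  "M_set E \<epsilon> C1 C2 = {D ** A | D A. D \<in> D_set C1 C2 \<and> A \<in> A_set E \<epsilon>}"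

fun partial_prod :: "(nat \<Rightarrow> real^'n^'n) \<Rightarrow> nat \<Rightarrow> real^'n^'n" where
  "partial_prod M 0 = M 0"
| "partial_prod M (Suc t) = M (Suc t) ** partial_prod M t"

definition ergodic :: "(nat \<Rightarrow> real^'n::finite^'n) \<Rightarrow> bool" where
  "ergodic P \<longleftrightarrow> (\<exists>S :: nat \<Rightarrow> real^'n^'n.
      (\<forall>t. rank (S t) = 1 \<and> (\<forall>i j. 0 < S t $ i $ j)) \<and>
      (\<forall>i j. (\<lambda>t. P t $ i $ j / S t $ i $ j) \<longlonglongrightarrow> 1))"

end

theory Submission
  imports Defs
begin


lemma rank_outer:
  fixes u v :: "real^'n"
  assumes "u \<noteq> 0" "v \<noteq> 0"
  shows "rank (\<chi> i j. u $ i * v $ j) = 1"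
proof -
  let ?S = "(\<chi> i j. u $ i * v $ j) :: real^'n^'n"
  have "rows ?S \<subseteq> span {v}"
    by (auto simp: rows_def row_def span_breakdown_eq vec_eq_iff)
  hence "dim (rows ?S) \<le> dim (span {v})" by (rule dim_subset)
  also have "\<dots> = dim {v}" by (rule dim_span)
  also have "\<dots> \<le> card {v}" by (rule dim_le_card) (auto intro: span_base)
  finally have 1: "rank ?S \<le> 1" by (simp add: row_rank_def)
  have "?S \<noteq> 0" using assms
    by (auto simp: vec_eq_iff)
  hence "rank ?S \<noteq> 0" by (simp only: rank_eq_0) simp
  with 1 show ?thesis by linarith
qed

definition Iv :: "(nat \<Rightarrow> 'n \<Rightarrow> real) \<Rightarrow> (nat \<Rightarrow> 'n \<Rightarrow> real) \<Rightarrow> nat \<Rightarrow> real \<Rightarrow> real \<Rightarrow> bool" where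
  "Iv x y t m Mx \<longleftrightarrow> (\<forall>k. m * y t k \<le> x t k \<and> x t k \<le> Mx * y t k)"

lemma abstract_conv:
  fixes x y :: "nat \<Rightarrow> 'n \<Rightarrow> real"
  assumes pos: "\<And>t k. T \<le> t \<Longrightarrow> 0 < y t k"
    and mono: "\<And>t m Mx. T \<le> t \<Longrightarrow> Iv x y t m Mx \<Longrightarrow> Iv x y (Suc t) m Mx"
    and contr: "\<And>t m Mx. T \<le> t \<Longrightarrow> Iv x y t m Mx \<Longrightarrow>
         \<exists>m' Mx'. m \<le> m' \<and> Mx' - m' \<le> q * (Mx - m) \<and> Iv x y (t + L) m' Mx'"
    and q: "0 \<le> q" "q < 1"
    and init: "Iv x y T mA MxA" and mA: "0 < mA"
  shows "(\<lambda>t. (x t i / y t i) / (x t i0 / y t i0)) \<longlonglongrightarrow> 1"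
proof -
  have monoR: "Iv x y (t + r) m Mx" if "T \<le> t" "Iv x y t m Mx" for t r m Mx
    using that by (induction r) (auto intro: mono)
  have wid: "\<exists>m Mx. mA \<le> m \<and> Mx - m \<le> q ^ n * (MxA - mA) \<and> Iv x y (T + n * L) m Mx" for n
  proof (induction n)
    case 0 then show ?case using init by auto
  next
    case (Suc n)
    then obtain m Mx where h: "mA \<le> m" "Mx - m \<le> q ^ n * (MxA - mA)" "Iv x y (T + n * L) m Mx" by blast
    from contr[OF _ h(3)] obtain m' Mx' where h2: "m \<le> m'" "Mx' - m' \<le> q * (Mx - m)"
        "Iv x y (T + n * L + L) m' Mx'" by auto
    have "q * (Mx - m) \<le> q * (q ^ n * (MxA - mA))" using h(2) q by (intro mult_left_mono) auto
    then show ?case using h h2 by (intro exI[of _ m'] exI[of _ Mx']) (auto simp: algebra_simps)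
  qed
  have W0: "0 \<le> MxA - mA"
  proof -
    have "mA * y T i \<le> MxA * y T i" using init unfolding Iv_def by (meson order_trans)
    thus ?thesis using pos[of T i] by simp
  qed
  show ?thesis
  proof (rule LIMSEQ_I)
    fix e :: real assume e: "0 < e"
    obtain n where n: "q ^ n < e * mA / (MxA - mA + 1)"
      using real_arch_pow_inv[of "e * mA / (MxA - mA + 1)" q] e mA W0 q by auto
    have qe: "q ^ n * (MxA - mA) < e * mA"
    proof -
      have "q ^ n * (MxA - mA) \<le> q ^ n * (MxA - mA + 1)" using q by (intro mult_left_mono) auto
      also have "\<dots> < e * mA" using n W0 by (simp add: pos_less_divide_eq)
      finally show ?thesis .
    qed
    show "\<exists>no. \<forall>t\<ge>no. norm ((x t i / y t i) / (x t i0 / y t i0) - 1) < e"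
    proof (intro exI allI impI)
      fix t assume t: "T + n * L \<le> t"
      obtain m Mx where h: "mA \<le> m" "Mx - m \<le> q ^ n * (MxA - mA)" "Iv x y (T + n * L) m Mx"
        using wid by blast
      have Iv: "Iv x y t m Mx" using monoR[OF _ h(3), of "t - (T + n*L)"] t by simp
      have yp: "0 < y t i" "0 < y t i0" using pos t by auto
      define r where "r = x t i / y t i"
      define r0 where "r0 = x t i0 / y t i0"
      have r: "m \<le> r" "r \<le> Mx" using Iv yp unfolding Iv_def r_def
        by (auto simp: pos_le_divide_eq pos_divide_le_eq)
      have r0: "m \<le> r0" "r0 \<le> Mx" using Iv yp unfolding Iv_def r0_def
        by (auto simp: pos_le_divide_eq pos_divide_le_eq)
      have r0p: "mA \<le> r0" using h r0 by simp
      have "\<bar>r - r0\<bar> \<le> Mx - m" using r r0 by auto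
      also have "\<dots> < e * mA" using h(2) qe by simp
      also have "\<dots> \<le> e * r0" using r0p e by simp
      finally have "\<bar>r - r0\<bar> < e * r0" .
      hence "\<bar>r / r0 - 1\<bar> < e" using r0p mA
        by (simp add: abs_less_iff field_simps)
      thus "norm ((x t i / y t i) / (x t i0 / y t i0) - 1) < e" by (simp add: r_def r0_def)
    qed
  qed
qed


lemma contract_step:
  fixes C :: "real^'n^'n" and x y :: "'n \<Rightarrow> real"
  assumes Cb: "\<And>i k. a \<le> C$i$k \<and> C$i$k \<le> b" and a: "0 < a" and y: "\<And>k. 0 < y k"
    and I: "\<And>k. m * y k \<le> x k \<and> x k \<le> Mx * y k"
  shows "\<exists>m' Mx'. m \<le> m' \<and> Mx' - m' \<le> (1 - a/b) * (Mx - m) \<and>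
     (\<forall>i. m' * (\<Sum>k\<in>UNIV. C$i$k * y k) \<le> (\<Sum>k\<in>UNIV. C$i$k * x k) \<and>
          (\<Sum>k\<in>UNIV. C$i$k * x k) \<le> Mx' * (\<Sum>k\<in>UNIV. C$i$k * y k))"
proof -
  define X where "X = (\<Sum>k\<in>UNIV. x k)"
  define Y where "Y = (\<Sum>k\<in>UNIV. y k)"
  define d where "d = a / b"
  have ab: "a \<le> b" using Cb[of undefined undefined] by auto
  have b: "0 < b" using a ab by simp
  have d0: "0 \<le> d" using a b by (simp add: d_def)
  have Y: "0 < Y" unfolding Y_def by (rule sum_pos) (auto intro: y)
  have mY: "m * Y \<le> X" unfolding X_def Y_def sum_distrib_left by (rule sum_mono) (use I in auto)
  have MY: "X \<le> Mx * Y" unfolding X_def Y_def sum_distrib_left by (rule sum_mono) (use I in auto)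
  define T where "T = X / Y"
  have mT: "m \<le> T" using mY Y by (simp add: T_def pos_le_divide_eq)
  have MT: "T \<le> Mx" using MY Y by (simp add: T_def pos_divide_le_eq)
  have XT: "X = T * Y" using Y by (simp add: T_def)
  show ?thesis
  proof (rule exI[of _ "m + d * (T - m)"], rule exI[of _ "Mx - d * (Mx - T)"], intro conjI allI)
    show "m \<le> m + d * (T - m)" using d0 mT by simp
    have "Mx - d * (Mx - T) - (m + d * (T - m)) = (1 - d) * (Mx - m)"
      by (simp add: algebra_simps)
    then show "Mx - d * (Mx - T) - (m + d * (T - m)) \<le> (1 - a / b) * (Mx - m)"
      by (simp add: d_def)
  next
    fix i
    define Cy where "Cy = (\<Sum>k\<in>UNIV. C$i$k * y k)"
    define Cx where "Cx = (\<Sum>k\<in>UNIV. C$i$k * x k)"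
    have CyY: "Cy \<le> b * Y" unfolding Cy_def Y_def sum_distrib_left
      by (rule sum_mono) (use Cb y in \<open>auto intro: mult_right_mono less_imp_le\<close>)
    have up1: "a * (Mx * Y - X) \<le> Mx * Cy - Cx"
    proof -
      have "a * (Mx * Y - X) = (\<Sum>k\<in>UNIV. a * (Mx * y k - x k))"
        by (simp add: X_def Y_def sum_distrib_left sum_subtractf algebra_simps)
      also have "\<dots> \<le> (\<Sum>k\<in>UNIV. C$i$k * (Mx * y k - x k))"
        by (rule sum_mono) (use Cb I in \<open>auto intro: mult_right_mono\<close>)
      also have "\<dots> = Mx * Cy - Cx"
        by (simp add: Cx_def Cy_def sum_distrib_left sum_subtractf algebra_simps)
      finally show ?thesis .
    qed
    have up2: "d * (Mx - T) * Cy \<le> a * (Mx * Y - X)"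
    proof -
      have "d * (Mx - T) * Cy \<le> d * (Mx - T) * (b * Y)"
        using CyY d0 MT by (intro mult_left_mono) auto
      also have "\<dots> = a * (Mx * Y - X)" using b by (simp add: d_def XT field_simps)
      finally show ?thesis .
    qed
    have lo1: "a * (X - m * Y) \<le> Cx - m * Cy"
    proof -
      have "a * (X - m * Y) = (\<Sum>k\<in>UNIV. a * (x k - m * y k))"
        by (simp add: X_def Y_def sum_distrib_left sum_subtractf algebra_simps)
      also have "\<dots> \<le> (\<Sum>k\<in>UNIV. C$i$k * (x k - m * y k))"
        by (rule sum_mono) (use Cb I in \<open>auto intro: mult_right_mono\<close>)
      also have "\<dots> = Cx - m * Cy"
        by (simp add: Cx_def Cy_def sum_distrib_left sum_subtractf algebra_simps)
      finally show ?thesis .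
    qed
    have lo2: "d * (T - m) * Cy \<le> a * (X - m * Y)"
    proof -
      have "d * (T - m) * Cy \<le> d * (T - m) * (b * Y)"
        using CyY d0 mT by (intro mult_left_mono) auto
      also have "\<dots> = a * (X - m * Y)" using b by (simp add: d_def XT field_simps)
      finally show ?thesis .
    qed
    show "(m + d * (T - m)) * Cy \<le> Cx" using lo1 lo2 by (simp add: algebra_simps)
    show "Cx \<le> (Mx - d * (Mx - T)) * Cy" using up1 up2 by (simp add: algebra_simps)
  qed
qed


lemma M_props:
  assumes "M \<in> M_set E \<epsilon> C1 C2" "0 < C1" "0 < \<epsilon>"
  shows "\<And>i k. 0 \<le> M$i$k \<and> M$i$k \<le> C2" "\<And>i k. (k,i) \<in> E \<Longrightarrow> C1 * \<epsilon> \<le> M$i$k"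
proof -
  obtain D A where DA: "M = D ** A" "D \<in> D_set C1 C2" "A \<in> A_set E \<epsilon>"
    using assms unfolding M_set_def by blast
  obtain d where d: "D = (\<chi> i j. if i = j then d $ i else 0)" "\<And>i. C1 \<le> d $ i \<and> d $ i \<le> C2"
    using DA(2) unfolding D_set_def by blast
  have A: "row_stochastic A" "\<And>i j. (j, i) \<in> E \<Longrightarrow> \<epsilon> \<le> A $ i $ j \<and> A $ i $ j \<le> 1"
     "\<And>i j. (j, i) \<notin> E \<Longrightarrow> A $ i $ j = 0"
    using DA(3) unfolding A_set_def by auto
  have Mik: "M$i$k = d$i * A$i$k" for i k
  proof -
    have "M$i$k = (\<Sum>l\<in>UNIV. (if i = l then d$i else 0) * A$l$k)"
      unfolding DA(1) d(1) matrix_matrix_mult_def by simp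
    also have "\<dots> = (\<Sum>l\<in>UNIV. if i = l then d$i * A$l$k else 0)"
      by (rule sum.cong) auto
    finally show ?thesis by simp
  qed
  have A0: "0 \<le> A$i$k" for i k using A(1) unfolding row_stochastic_def by auto
  have A1: "A$i$k \<le> 1" for i k using A(2)[of k i] A(3)[of k i] by (cases "(k,i) \<in> E") auto
  show "0 \<le> M$i$k \<and> M$i$k \<le> C2" for i k
  proof -
    have "0 \<le> d$i" using d(2)[of i] assms(2) by linarith
    moreover have "d$i * A$i$k \<le> C2 * 1" using d(2)[of i] A0[of i k] A1[of i k] \<open>0 \<le> d$i\<close>
      by (intro mult_mono) auto
    ultimately show ?thesis using A0[of i k] by (simp add: Mik)
  qed
  show "C1 * \<epsilon> \<le> M$i$k" if "(k,i) \<in> E" for i k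
  proof -
    have "C1 * \<epsilon> \<le> d$i * A$i$k" using d(2)[of i] A(2)[OF that] assms(2,3)
      by (intro mult_mono) auto
    thus ?thesis by (simp add: Mik)
  qed
qed

fun blk :: "(nat \<Rightarrow> real^'n^'n) \<Rightarrow> nat \<Rightarrow> nat \<Rightarrow> real^'n^'n" where
  "blk M t 0 = mat 1"
| "blk M t (Suc s) = M (Suc (t + s)) ** blk M t s"

lemma pp_blk: "partial_prod M (t + s) = blk M t s ** partial_prod M t"
  by (induction s) (auto simp: matrix_mul_assoc)

context
  fixes M :: "nat \<Rightarrow> real^'n^'n" and E b c
  assumes nn: "\<And>t i k. 0 \<le> M t $i$k \<and> M t $i$k \<le> b"
    and lb: "\<And>t i k. (k,i) \<in> E \<Longrightarrow> c \<le> M t $i$k"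
    and loops: "\<And>i. (i,i) \<in> E" and c: "0 < c"
begin

lemma blk_nonneg: "0 \<le> blk M t s $i$k"
proof (induction s arbitrary: i k)
  case 0 then show ?case by (simp add: mat_def)
next
  case (Suc s) then show ?case
    by (simp add: matrix_matrix_mult_def sum_nonneg nn)
qed

lemma blk_upper: "blk M t s $i$k \<le> (real CARD('n) * b)^s"
proof (induction s arbitrary: i k)
  case 0 then show ?case by (simp add: mat_def)
next
  case (Suc s)
  have b0: "0 \<le> b" using nn[of 0 i i] by linarith
  have "blk M t (Suc s) $i$k = (\<Sum>l\<in>UNIV. M (Suc (t+s)) $i$l * blk M t s $l$k)"
    by (simp add: matrix_matrix_mult_def)
  also have "\<dots> \<le> (\<Sum>l\<in>(UNIV::'n set). b * (real CARD('n) * b)^s)"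
    by (rule sum_mono, rule mult_mono) (use nn Suc blk_nonneg b0 in auto)
  also have "\<dots> = (real CARD('n) * b)^(Suc s)" by simp
  finally show ?case .
qed

lemma blk_lower: "(k,i) \<in> E ^^ m \<Longrightarrow> m \<le> s \<Longrightarrow> c^s \<le> blk M t s $i$k"
proof (induction s arbitrary: i k m)
  case 0 then show ?case by (simp add: mat_def)
next
  case (Suc s)
  have eq: "blk M t (Suc s) $i$k = (\<Sum>l\<in>UNIV. M (Suc (t+s)) $i$l * blk M t s $l$k)"
    by (simp add: matrix_matrix_mult_def)
  obtain l where l: "(l,i) \<in> E" "c^s \<le> blk M t s $l$k"
  proof (cases "m \<le> s")
    case True then show ?thesis using that[of i] Suc.IH[OF Suc.prems(1)] loops by auto
  next
    case False
    then have "m = Suc s" using Suc.prems by simp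
    then obtain l where "(k,l) \<in> E^^s" "(l,i) \<in> E" using Suc.prems(1) by auto
    then show ?thesis using that Suc.IH[of k l s] by auto
  qed
  have "c^(Suc s) = c * c^s" by simp
  also have "\<dots> \<le> M (Suc (t+s)) $i$l * blk M t s $l$k"
    using lb[OF l(1)] l(2) c nn by (intro mult_mono) auto
  also have "\<dots> \<le> (\<Sum>l\<in>UNIV. M (Suc (t+s)) $i$l * blk M t s $l$k)"
    by (rule member_le_sum) (use nn blk_nonneg in auto)
  finally show ?case using eq by simp
qed

end


theorem mainTheorem9:
  fixes E :: "('n::finite \<times> 'n) set"
    and \<epsilon> C1 C2 :: real
    and M :: "nat \<Rightarrow> real^'n^'n"
  assumes "strongly_connected E"
    and "has_all_self_loops E"
    and "0 < \<epsilon>" and "0 < C1" and "0 < C2"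
    and "\<forall>t. M t \<in> M_set E \<epsilon> C1 C2"
  shows "ergodic (partial_prod M)"
proof -
  define c where "c = C1 * \<epsilon>"
  have c: "0 < c" using assms(3,4) by (simp add: c_def)
  have Mp: "\<And>t i k. 0 \<le> M t $i$k \<and> M t $i$k \<le> C2"
    using M_props(1)[OF assms(6)[rule_format] assms(4) assms(3)] by blast
  have Ml: "\<And>t i k. (k,i) \<in> E \<Longrightarrow> c \<le> M t $i$k"
    using M_props(2)[OF assms(6)[rule_format] assms(4) assms(3)] by (simp add: c_def)
  have loops: "\<And>i. (i,i) \<in> E" using assms(2) by (simp add: has_all_self_loops_def)
  note bn = blk_nonneg[where M=M and E=E and b=C2 and c=c, OF Mp Ml loops c]
  note bu = blk_upper[where M=M and E=E and b=C2 and c=c, OF Mp Ml loops c]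
  note bl = blk_lower[where M=M and E=E and b=C2 and c=c, OF Mp Ml loops c]
  have reach: "\<exists>m. p \<in> E ^^ m" for p
  proof (cases p)
    case (Pair k i)
    show ?thesis
    proof (cases "k = i")
      case True then show ?thesis using Pair by (intro exI[of _ 0]) auto
    next
      case False
      then have "(k,i) \<in> E\<^sup>*" using assms(1) by (simp add: strongly_connected_def)
      then show ?thesis using Pair by (simp add: rtrancl_power)
    qed
  qed
  define f where "f p = (SOME m. p \<in> E ^^ m)" for p
  define L where "L = Max (range f)"
  have fL: "(k,i) \<in> E ^^ f (k,i) \<and> f (k,i) \<le> L" for k i
  proof
    show "(k,i) \<in> E ^^ f (k,i)" unfolding f_def by (rule someI_ex[OF reach])
    show "f (k,i) \<le> L" unfolding L_def by (rule Max_ge) auto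
  qed
  define a where "a = c ^ L"
  define bb where "bb = (real CARD('n) * C2) ^ L"
  have blkL: "a \<le> blk M t L $i$k \<and> blk M t L $i$k \<le> bb" for t i k
    using bl[where k=k and i=i and m="f (k,i)" and s=L and t=t] fL[of k i] bu[where t=t and s=L and i=i and k=k] by (simp add: a_def bb_def)
  have a0: "0 < a" using c by (simp add: a_def)
  have abb: "a \<le> bb" using blkL[of 0 undefined undefined] by linarith
  define P where "P = partial_prod M"
  have Pblk: "P (t + s) $i$j = (\<Sum>l\<in>UNIV. blk M t s $i$l * P t $l$j)" for t s i j
    unfolding P_def pp_blk by (simp add: matrix_matrix_mult_def)
  have Pstep: "P (Suc t) $i$j = (\<Sum>l\<in>UNIV. M (Suc t) $i$l * P t $l$j)" for t i j
    unfolding P_def by (simp add: matrix_matrix_mult_def)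
  have P0: "P 0 = M 0" by (simp add: P_def)
  have Pnn: "0 \<le> P t $i$k" for t i k
    using Pblk[of 0 t i k] by (simp add: P0 sum_nonneg bn Mp)
  have Pdiag: "0 < P t $k$k" for t k
  proof -
    have ct: "0 < c^t" using c by simp
    have "0 < blk M 0 t $k$k" using bl[where k=k and i=k and m=0 and s=t and t=0] ct by simp
    moreover have "0 < M 0 $k$k" using Ml[OF loops, of 0 k] c by simp
    ultimately have "0 < blk M 0 t $k$k * M 0 $k$k" by (rule mult_pos_pos)
    also have "\<dots> \<le> (\<Sum>l\<in>UNIV. blk M 0 t $k$l * M 0 $l$k)"
      by (rule member_le_sum) (use bn Mp in auto)
    finally show ?thesis using Pblk[of 0 t k k] by (simp add: P0)
  qed
  have Ppos: "0 < P t $i$k" if "L \<le> t" for t i k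
  proof -
    define s where "s = t - L"
    have s: "t = s + L" using that by (simp add: s_def)
    have "0 < blk M s L $i$k * P s $k$k"
      using blkL[of s i k] a0 Pdiag[of s k] by (intro mult_pos_pos) auto
    also have "\<dots> \<le> (\<Sum>l\<in>UNIV. blk M s L $i$l * P s $l$k)"
      by (rule member_le_sum) (use bn Pnn in auto)
    also have "\<dots> = P (s + L) $i$k" by (rule Pblk[symmetric])
    finally show ?thesis using s by simp
  qed
  define j0 :: 'n where "j0 = undefined"
  have conv: "(\<lambda>t. (P t $i$j / P t $i$j0) / (P t $j0$j / P t $j0$j0)) \<longlonglongrightarrow> 1" for i j
  proof -
    define x where "x t k = P t $k$j" for t k
    define y where "y t k = P t $k$j0" for t k
    define m0 where "m0 = Min (range (\<lambda>k. x L k / y L k))"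
    define Mx0 where "Mx0 = Max (range (\<lambda>k. x L k / y L k))"
    have ypos: "\<And>t k. L \<le> t \<Longrightarrow> 0 < y t k" by (simp add: y_def Ppos)
    have "(\<lambda>t. (x t i / y t i) / (x t j0 / y t j0)) \<longlonglongrightarrow> 1"
    proof (rule abstract_conv[where T=L and L=L and q="1 - a/bb" and mA=m0 and MxA=Mx0])
      show "\<And>t k. L \<le> t \<Longrightarrow> 0 < y t k" by (rule ypos)
      show "Iv x y (Suc t) m Mx" if "L \<le> t" "Iv x y t m Mx" for t m Mx
        unfolding Iv_def
      proof
        fix k
        have h: "m * y t l \<le> x t l \<and> x t l \<le> Mx * y t l" for l using that(2) by (simp add: Iv_def)
        have "m * y (Suc t) k = (\<Sum>l\<in>UNIV. M (Suc t) $k$l * (m * y t l))"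
          by (simp add: y_def Pstep sum_distrib_left algebra_simps)
        also have "\<dots> \<le> (\<Sum>l\<in>UNIV. M (Suc t) $k$l * x t l)"
          by (rule sum_mono, rule mult_left_mono) (use h Mp in auto)
        also have "\<dots> = x (Suc t) k" by (simp add: x_def Pstep)
        finally have 1: "m * y (Suc t) k \<le> x (Suc t) k" .
        have "x (Suc t) k = (\<Sum>l\<in>UNIV. M (Suc t) $k$l * x t l)" by (simp add: x_def Pstep)
        also have "\<dots> \<le> (\<Sum>l\<in>UNIV. M (Suc t) $k$l * (Mx * y t l))"
          by (rule sum_mono, rule mult_left_mono) (use h Mp in auto)
        also have "\<dots> = Mx * y (Suc t) k"
          by (simp add: y_def Pstep sum_distrib_left algebra_simps)
        finally show "m * y (Suc t) k \<le> x (Suc t) k \<and> x (Suc t) k \<le> Mx * y (Suc t) k"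
          using 1 by simp
      qed
      show "\<exists>m' Mx'. m \<le> m' \<and> Mx' - m' \<le> (1 - a/bb) * (Mx - m) \<and> Iv x y (t + L) m' Mx'"
        if tL: "L \<le> t" and iv: "Iv x y t m Mx" for t m Mx
      proof -
        obtain m' Mx' where h: "m \<le> m'" "Mx' - m' \<le> (1 - a/bb) * (Mx - m)"
          "\<forall>i. m' * (\<Sum>k\<in>UNIV. blk M t L $i$k * y t k) \<le> (\<Sum>k\<in>UNIV. blk M t L $i$k * x t k) \<and>
          (\<Sum>k\<in>UNIV. blk M t L $i$k * x t k) \<le> Mx' * (\<Sum>k\<in>UNIV. blk M t L $i$k * y t k)"
          using contract_step[of a "blk M t L" bb "y t" m "x t" Mx] blkL a0 ypos[OF tL]
            iv unfolding Iv_def by blast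
        have "Iv x y (t + L) m' Mx'" using h(3) by (simp add: Iv_def x_def y_def Pblk)
        thus ?thesis using h(1,2) by blast
      qed
      show "0 \<le> 1 - a / bb" using abb a0 by simp
      show "1 - a / bb < 1" using abb a0 by simp
      have fin: "finite (range (\<lambda>k. x L k / y L k))" by simp
      show "Iv x y L m0 Mx0" unfolding Iv_def
      proof
        fix k
        have "m0 \<le> x L k / y L k" unfolding m0_def by (rule Min_le[OF fin]) auto
        moreover have "x L k / y L k \<le> Mx0" unfolding Mx0_def by (rule Max_ge[OF fin]) auto
        ultimately show "m0 * y L k \<le> x L k \<and> x L k \<le> Mx0 * y L k"
          using ypos[of L k] by (simp add: pos_le_divide_eq pos_divide_le_eq)
      qed
      have "m0 \<in> range (\<lambda>k. x L k / y L k)" unfolding m0_def by (rule Min_in[OF fin]) auto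
      then obtain k where "m0 = x L k / y L k" by auto
      then show "0 < m0" using ypos[of L k] Ppos[of L k j] by (simp add: x_def)
    qed
    thus ?thesis by (simp add: x_def y_def)
  qed
  define S where "S t = (if L \<le> t then (\<chi> i j. (\<chi> i. P t $i$j0) $ i * (\<chi> j. P t $j0$j / P t $j0$j0) $ j)
     else (\<chi> i j. (\<chi> i. (1::real)) $ i * (\<chi> j. (1::real)) $ j))" for t
  show ?thesis
    unfolding ergodic_def P_def[symmetric]
  proof (intro exI[of _ S] conjI allI)
    fix t
    show "rank (S t) = 1"
    proof (cases "L \<le> t")
      case True
      have u: "(\<chi> i. P t $i$j0) \<noteq> 0" using Ppos[OF True, of j0 j0] by (auto simp: vec_eq_iff intro!: exI[of _ j0])
      have v: "(\<chi> j. P t $j0$j / P t $j0$j0) \<noteq> 0" using Ppos[OF True, of j0 j0]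
        by (auto simp: vec_eq_iff intro!: exI[of _ j0])
      have e: "S t = (\<chi> i j. (\<chi> i. P t $i$j0) $ i * (\<chi> j. P t $j0$j / P t $j0$j0) $ j)"
        unfolding S_def using True by (simp only: if_True)
      show ?thesis unfolding e by (rule rank_outer[OF u v])
    next
      case False
      have u: "(\<chi> i. (1::real)) \<noteq> (0::real^'n)" by (auto simp: vec_eq_iff)
      have e: "S t = (\<chi> i j. (\<chi> i. (1::real)) $ i * (\<chi> j. (1::real)) $ j)"
        unfolding S_def using False by (simp only: if_False)
      show ?thesis unfolding e by (rule rank_outer[OF u u])
    qed
    fix i j
    show "0 < S t $i$j" using Ppos by (simp add: S_def)
  next
    fix i j
    show "(\<lambda>t. P t $i$j / S t $i$j) \<longlonglongrightarrow> 1"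
    proof (subst tendsto_cong)
      show "\<forall>\<^sub>F t in sequentially. P t $i$j / S t $i$j = (P t $i$j / P t $i$j0) / (P t $j0$j / P t $j0$j0)"
        unfolding eventually_sequentially
        by (rule exI[of _ L]) (simp add: S_def divide_divide_eq_left)
      show "(\<lambda>t. (P t $i$j / P t $i$j0) / (P t $j0$j / P t $j0$j0)) \<longlonglongrightarrow> 1" by (rule conv)
    qed
  qed
qed

end
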